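(* Let $\mathcal{C}_1$ be an even-like $[n,k_1,d_1]_2$ binary linear code, let $\mathcal{C}_2$ be the $[n,1,n]_2$ repetition code generated by the all-ones vector, and let $\mathcal{C}=\{(\mathbf{u},\mathbf{u}+\mathbf{v}):\mathbf{u}\in\mathcal{C}_1,\mathbf{v}\in\mathcal{C}_2\}$. Then: 1) $\mathcal{C}$ is a $[2n,k_1+1,\min\{2d_1,n\}]_2$ odd-like code if and only if $\mathcal{C}$ is a binary almost Euclidean self-orthogonal code; 2) $\mathcal{C}$ is a $[2n,k_1+1,\min\{2d_1,n\}]_2$ even-like code if and only if $\mathcal{C}$ is a binary Euclidean self-orthogonal code.
   Context: A binary code is even-like if every codeword has even Hamming weight, and odd-like otherwise. For a binary $[N,k,d]_2$ code $\mathcal{C}$, $\mathrm{Hull}_E(\mathcal{C})=\mathcal{C}\cap\mathcal{C}^{\perp_E}$ with $\perp_E$ the dual under $\sum_ix_iy_i$; $\mathcal{C}$ is Euclidean self-orthogonal if $\dim(\mathrm{Hull}_E(\mathcal{C}))=k$ and almost Euclidean self-orthogonal if $\dim(\mathrm{Hull}_E(\mathcal{C}))=k-1$. *)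

theory Defs
  imports Main "HOL-Library.Z2"
begin

type_synonym bvec = "nat \<Rightarrow> bit"

definition vecs :: "nat \<Rightarrow> bvec set" where
  "vecs n = {x. \<forall>i\<ge>n. x i = 0}"

definition vzero :: bvec where
  "vzero = (\<lambda>i. 0)"

definition vadd :: "bvec \<Rightarrow> bvec \<Rightarrow> bvec" where
  "vadd x y = (\<lambda>i. x i + y i)"

definition ones :: "nat \<Rightarrow> bvec" where
  "ones n = (\<lambda>i. if i < n then 1 else 0)"

definition vsum :: "bvec set \<Rightarrow> bvec" where
  "vsum S = (\<lambda>i. \<Sum>b\<in>S. b i)"

definition wt :: "bvec \<Rightarrow> nat" where
  "wt x = card {i. x i \<noteq> 0}"

definition hdist :: "bvec \<Rightarrow> bvec \<Rightarrow> nat" where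
  "hdist x y = card {i. x i \<noteq> y i}"

definition inner :: "nat \<Rightarrow> bvec \<Rightarrow> bvec \<Rightarrow> bit" where
  "inner n x y = (\<Sum>i<n. x i * y i)"

definition linear_code :: "nat \<Rightarrow> bvec set \<Rightarrow> bool" where
  "linear_code n C \<longleftrightarrow> C \<subseteq> vecs n \<and> vzero \<in> C \<and> (\<forall>x\<in>C. \<forall>y\<in>C. vadd x y \<in> C)"

text \<open>GF(2)-span and linear independence (coefficients are 0 or 1)\<close>
definition span2 :: "bvec set \<Rightarrow> bvec set" where
  "span2 B = {vsum T | T. T \<subseteq> B}"

definition lin_indep2 :: "bvec set \<Rightarrow> bool" where
  "lin_indep2 B \<longleftrightarrow> (\<forall>T\<subseteq>B. T \<noteq> {} \<longrightarrow> vsum T \<noteq> vzero)"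

definition has_dim :: "bvec set \<Rightarrow> nat \<Rightarrow> bool" where
  "has_dim C k \<longleftrightarrow> (\<exists>B. finite B \<and> B \<subseteq> C \<and> lin_indep2 B \<and> span2 B = C \<and> card B = k)"

definition min_dist :: "bvec set \<Rightarrow> nat" where
  "min_dist C = Min {hdist x y | x y. x \<in> C \<and> y \<in> C \<and> x \<noteq> y}"

text \<open>C is a binary [n,k,d] linear code (k >= 1 so that d is defined)\<close>
definition is_code :: "nat \<Rightarrow> nat \<Rightarrow> nat \<Rightarrow> bvec set \<Rightarrow> bool" where
  "is_code n k d C \<longleftrightarrow> linear_code n C \<and> has_dim C k \<and> 1 \<le> k \<and> min_dist C = d"

definition even_like :: "bvec set \<Rightarrow> bool" where
  "even_like C \<longleftrightarrow> (\<forall>x\<in>C. even (wt x))"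

definition odd_like :: "bvec set \<Rightarrow> bool" where
  "odd_like C \<longleftrightarrow> \<not> even_like C"

definition euclid_dual :: "nat \<Rightarrow> bvec set \<Rightarrow> bvec set" where
  "euclid_dual n C = {y \<in> vecs n. \<forall>x\<in>C. inner n x y = 0}"

definition hull :: "nat \<Rightarrow> bvec set \<Rightarrow> bvec set" where
  "hull n C = C \<inter> euclid_dual n C"

definition self_orth :: "nat \<Rightarrow> bvec set \<Rightarrow> bool" where
  "self_orth n C \<longleftrightarrow> linear_code n C \<and> (\<exists>k. has_dim C k \<and> has_dim (hull n C) k)"

definition almost_self_orth :: "nat \<Rightarrow> bvec set \<Rightarrow> bool" where
  "almost_self_orth n C \<longleftrightarrow> linear_code n C \<and> (\<exists>k. has_dim C (k + 1) \<and> has_dim (hull n C) k)"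

definition concat_vec :: "nat \<Rightarrow> bvec \<Rightarrow> bvec \<Rightarrow> bvec" where
  "concat_vec n u w = (\<lambda>i. if i < n then u i else w (i - n))"

definition uuv :: "nat \<Rightarrow> bvec set \<Rightarrow> bvec set \<Rightarrow> bvec set" where
  "uuv n C1 C2 = {concat_vec n u (vadd u v) | u v. u \<in> C1 \<and> v \<in> C2}"

end

theory Submission imports Defs begin

declare add_bit_eq_xor[simp del] mult_bit_eq_and[simp del]

lemma bit_add_self[simp]: "(x::bit) + x = 0"
  by (cases x) (simp_all add: add_bit_eq_xor)

lemma bit_add_self2[simp]: "(x::bit) + (x + y) = y"
  by (metis add.assoc add_0 bit_add_self)

lemma bit_add_eq0: "((x::bit) + y = 0) = (x = y)"
  by (cases x; cases y) (simp_all add: add_bit_eq_xor)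

lemma bit_cases2: "(x::bit) = 0 \<or> x = 1" by (cases x) auto

lemma vadd_apply[simp]: "vadd x y i = x i + y i" by (simp add: vadd_def)
lemma vzero_apply[simp]: "vzero i = 0" by (simp add: vzero_def)
lemma ones_apply: "ones n i = (if i < n then 1 else 0)" by (simp add: ones_def)
lemma concat_apply: "concat_vec n a b i = (if i < n then a i else b (i - n))"
  by (simp add: concat_vec_def)

lemma vecsD: "x \<in> vecs n \<Longrightarrow> n \<le> i \<Longrightarrow> x i = 0" by (simp add: vecs_def)
lemma vadd_vecs: "x \<in> vecs n \<Longrightarrow> y \<in> vecs n \<Longrightarrow> vadd x y \<in> vecs n"
  by (simp add: vecs_def)
lemma vzero_vecs: "vzero \<in> vecs n" by (simp add: vecs_def)
lemma ones_vecs: "ones n \<in> vecs n" by (simp add: vecs_def ones_def)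
lemma concat_vecs: "a \<in> vecs n \<Longrightarrow> b \<in> vecs n \<Longrightarrow> concat_vec n a b \<in> vecs (2*n)"
  by (auto simp add: vecs_def concat_apply)

lemma vadd_vzero[simp]: "vadd x vzero = x" "vadd vzero x = x" by (auto simp: vadd_def vzero_def)
lemma vadd_self[simp]: "vadd x x = vzero" by (auto simp: vadd_def vzero_def)
lemma vadd_eq0: "(vadd x y = vzero) = (x = y)"
  by (auto simp: fun_eq_iff bit_add_eq0)
lemma vadd_comm: "vadd x y = vadd y x" by (auto simp: vadd_def add.commute)
lemma vadd_assoc: "vadd (vadd x y) z = vadd x (vadd y z)" by (auto simp: vadd_def add.assoc)

lemma ones_ne: "0 < n \<Longrightarrow> ones n \<noteq> vzero"
  by (auto simp: fun_eq_iff ones_apply)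

lemma concat_add: "vadd (concat_vec n a b) (concat_vec n a' b') = concat_vec n (vadd a a') (vadd b b')"
  by (auto simp: fun_eq_iff concat_apply)

lemma concat_zero[simp]: "concat_vec n vzero vzero = vzero"
  by (auto simp: fun_eq_iff concat_apply)

lemma concat_eq:
  assumes "a \<in> vecs n" "b \<in> vecs n" "a' \<in> vecs n" "b' \<in> vecs n"
  shows "(concat_vec n a b = concat_vec n a' b') = (a = a' \<and> b = b')"
proof
  assume h: "concat_vec n a b = concat_vec n a' b'"
  have "a i = a' i" for i
  proof (cases "i < n")
    case True then show ?thesis using fun_cong[OF h, of i] by (simp add: concat_apply)
  next
    case False then show ?thesis using assms by (simp add: vecsD)
  qed
  moreover have "b j = b' j" for j
  proof (cases "j < n")
    case True then show ?thesis using fun_cong[OF h, of "n+j"] by (simp add: concat_apply)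
  next
    case False then show ?thesis using assms by (simp add: vecsD)
  qed
  ultimately show "a = a' \<and> b = b'" by auto
qed simp

lemma concat_eq0:
  assumes "a \<in> vecs n" "b \<in> vecs n"
  shows "(concat_vec n a b = vzero) = (a = vzero \<and> b = vzero)"
  using concat_eq[OF assms vzero_vecs vzero_vecs] by simp

definition indb :: "bit \<Rightarrow> nat" where "indb b = (if b = 0 then 0 else 1)"

lemma of_nat_indb[simp]: "(of_nat (indb b) :: bit) = b"
  by (cases b) (simp_all add: indb_def)

lemma wt_sum: "x \<in> vecs m \<Longrightarrow> wt x = (\<Sum>i<m. indb (x i))"
proof -
  assume x: "x \<in> vecs m"
  have "{i. x i \<noteq> 0} = {i\<in>{..<m}. x i \<noteq> 0}" using x
    by (auto simp: vecs_def) (metis leI zero_neq_one)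
  then have "wt x = card {i\<in>{..<m}. x i \<noteq> 0}" by (simp add: wt_def)
  also have "\<dots> = (\<Sum>i<m. indb (x i))"
    by (simp only: card_eq_sum sum.inter_filter[OF finite_lessThan]) (auto simp: indb_def intro!: sum.cong)
  finally show ?thesis .
qed

lemma sum_split: "(\<Sum>i<a+b. f i) = (\<Sum>i<a. f i) + (\<Sum>i<b. f (a+i))"
  for f :: "nat \<Rightarrow> 'a::comm_monoid_add"
  by (induct b) (simp_all add: add.assoc)

lemma sum_concat: "(\<Sum>i<2*n. g (concat_vec n a b i)) = (\<Sum>i<n. g (a i)) + (\<Sum>i<n. g (b i))"
  for g :: "bit \<Rightarrow> 'a::comm_monoid_add"
proof -
  have "(\<Sum>i<2*n. g (concat_vec n a b i)) = (\<Sum>i<n+n. g (concat_vec n a b i))" by (simp add: mult_2)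
  also have "\<dots> = (\<Sum>i<n. g (a i)) + (\<Sum>i<n. g (b i))"
    by (simp add: sum_split concat_apply)
  finally show ?thesis .
qed

lemma sum_concat2: "(\<Sum>i<2*n. g (concat_vec n a b i) (concat_vec n a' b' i)) = (\<Sum>i<n. g (a i) (a' i)) + (\<Sum>i<n. g (b i) (b' i))"
  for g :: "bit \<Rightarrow> bit \<Rightarrow> 'a::comm_monoid_add"
proof -
  have "(\<Sum>i<2*n. g (concat_vec n a b i) (concat_vec n a' b' i)) = (\<Sum>i<n+n. g (concat_vec n a b i) (concat_vec n a' b' i))" by (simp add: mult_2)
  also have "\<dots> = (\<Sum>i<n. g (a i) (a' i)) + (\<Sum>i<n. g (b i) (b' i))"
    by (simp add: sum_split concat_apply)
  finally show ?thesis .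
qed

lemma wt_concat: "a \<in> vecs n \<Longrightarrow> b \<in> vecs n \<Longrightarrow> wt (concat_vec n a b) = wt a + wt b"
  by (simp add: wt_sum[OF concat_vecs] wt_sum sum_concat)

lemma wt_ones: "u \<in> vecs n \<Longrightarrow> wt u + wt (vadd u (ones n)) = n"
proof -
  assume u: "u \<in> vecs n"
  have "indb b + indb (b + 1) = 1" for b :: bit
    by (cases b) (simp_all add: indb_def)
  then have "wt u + wt (vadd u (ones n)) = (\<Sum>i<n. (1::nat))"
    using u by (simp add: wt_sum wt_sum[OF vadd_vecs[OF u ones_vecs]] sum.distrib[symmetric] ones_apply)
  then show ?thesis by simp
qed

lemma inner_concat: "inner (2*n) (concat_vec n a b) (concat_vec n a' b') = inner n a a' + inner n b b'"
  unfolding inner_def by (rule sum_concat2)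

lemma inner_add1: "inner n (vadd x y) z = inner n x z + inner n y z"
  by (simp add: inner_def distrib_right sum.distrib)
lemma inner_add2: "inner n z (vadd x y) = inner n z x + inner n z y"
  by (simp add: inner_def distrib_left sum.distrib)
lemma inner_comm: "inner n x y = inner n y x"
  by (simp add: inner_def mult.commute)
lemma inner_zero[simp]: "inner n x vzero = 0" "inner n vzero x = 0"
  by (simp_all add: inner_def)

lemma inner_ones: "u \<in> vecs n \<Longrightarrow> inner n u (ones n) = of_nat (wt u)"
  by (simp add: inner_def ones_apply wt_sum of_nat_sum)

lemma inner_ones_ones: "inner n (ones n) (ones n) = of_nat n"
  by (simp add: inner_def ones_apply)

lemma of_nat_bit_eq0: "(of_nat m :: bit) = 0 \<longleftrightarrow> even m"
  by (induct m) (auto simp: add_bit_eq_xor)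

lemma vsum_empty[simp]: "vsum {} = vzero" by (simp add: vsum_def vzero_def)
lemma vsum_insert: "finite T \<Longrightarrow> x \<notin> T \<Longrightarrow> vsum (insert x T) = vadd x (vsum T)"
  by (simp add: vsum_def vadd_def)
lemma vsum_single[simp]: "vsum {b} = b" by (simp add: vsum_def)
lemma vsum_union: "finite A \<Longrightarrow> finite B \<Longrightarrow> A \<inter> B = {} \<Longrightarrow> vsum (A \<union> B) = vadd (vsum A) (vsum B)"
  by (simp add: vsum_def vadd_def sum.union_disjoint fun_eq_iff)

lemma vadd_cancel: "vadd a x = vadd a' x \<Longrightarrow> a = a'"
  by (metis vadd_assoc vadd_self vadd_vzero(1))

lemma vsum_inj:
  assumes B: "finite B" "lin_indep2 B"
  shows "inj_on vsum (Pow B)"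
proof (rule inj_onI)
  fix T T' assume T: "T \<in> Pow B" and T': "T' \<in> Pow B" and eq: "vsum T = vsum T'"
  have fT: "finite T" "finite T'" using T T' B finite_subset by auto
  have h1: "T = (T - T') \<union> (T \<inter> T')" by auto
  have "vsum ((T - T') \<union> (T \<inter> T')) = vadd (vsum (T - T')) (vsum (T \<inter> T'))"
    by (rule vsum_union) (use fT in auto)
  then have e1: "vsum T = vadd (vsum (T - T')) (vsum (T \<inter> T'))" using arg_cong[OF h1, of vsum] by argo
  have h2: "T' = (T' - T) \<union> (T \<inter> T')" by auto
  have "vsum ((T' - T) \<union> (T \<inter> T')) = vadd (vsum (T' - T)) (vsum (T \<inter> T'))"
    by (rule vsum_union) (use fT in auto)
  then have e2: "vsum T' = vadd (vsum (T' - T)) (vsum (T \<inter> T'))" using arg_cong[OF h2, of vsum] by argo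
  have A: "vsum (T - T') = vsum (T' - T)" 
    by (rule vadd_cancel[of _ "vsum (T \<inter> T')"]) (use e1 e2 eq in argo)
  have "vsum ((T - T') \<union> (T' - T)) = vadd (vsum (T - T')) (vsum (T' - T))"
    by (rule vsum_union) (use fT in auto)
  also have "\<dots> = vzero" using A by simp
  finally have z: "vsum ((T - T') \<union> (T' - T)) = vzero" .
  have D: "(T - T') \<union> (T' - T) \<subseteq> B" using T T' by auto
  have "(T - T') \<union> (T' - T) = {}"
    using B(2)[unfolded lin_indep2_def, rule_format, OF D] z by blast
  then show "T = T'" by auto
qed

lemma span_card:
  assumes "finite B" "lin_indep2 B"
  shows "card (span2 B) = 2 ^ card B"
proof -
  have "span2 B = vsum ` Pow B" by (auto simp: span2_def)
  then have "card (span2 B) = card (Pow B)" using card_image[OF vsum_inj[OF assms]] by simp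
  then show ?thesis using assms by (simp add: card_Pow)
qed

lemma has_dim_card: "has_dim S k \<Longrightarrow> card S = 2 ^ k"
  unfolding has_dim_def using span_card by blast

lemma has_dim_unique: "has_dim S k \<Longrightarrow> has_dim S k' \<Longrightarrow> k = k'"
proof -
  assume "has_dim S k" "has_dim S k'"
  then have "(2::nat) ^ k = 2 ^ k'" using has_dim_card by metis
  then show "k = k'" by simp
qed

lemma inj_f: "inj_on (\<lambda>u. concat_vec n u u) (vecs n)"
  by (rule inj_onI) (simp add: concat_eq)

lemma vsum_f:
  assumes "T \<subseteq> vecs n" "finite T"
  shows "vsum ((\<lambda>u. concat_vec n u u) ` T) = concat_vec n (vsum T) (vsum T)"
proof -
  have inj: "inj_on (\<lambda>u. concat_vec n u u) T" using inj_f assms inj_on_subset by blast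
  show ?thesis
    by (auto simp: fun_eq_iff vsum_def sum.reindex[OF inj] concat_apply)
qed

lemma vsum_in:
  assumes "T \<subseteq> B" "span2 B = C1"
  shows "vsum T \<in> C1"
  using assms unfolding span2_def by blast

lemma span2I: "T \<subseteq> B \<Longrightarrow> vsum T \<in> span2 B" by (auto simp: span2_def)

lemma has_dimI: "finite B \<Longrightarrow> B \<subseteq> C \<Longrightarrow> lin_indep2 B \<Longrightarrow> span2 B = C \<Longrightarrow> card B = k \<Longrightarrow> has_dim C k"
  unfolding has_dim_def by blast

lemma dim_f:
  assumes fin: "finite B1" and sub: "B1 \<subseteq> C1" and C1v: "C1 \<subseteq> vecs n"
    and li: "lin_indep2 B1" and sp: "span2 B1 = C1"
  shows "has_dim ((\<lambda>u. concat_vec n u u) ` C1) (card B1)"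
proof -
  let ?f = "\<lambda>u. concat_vec n u u"
  have B1v: "B1 \<subseteq> vecs n" using sub C1v by auto
  have injB: "inj_on ?f B1" using inj_f B1v inj_on_subset by blast
  have li2: "lin_indep2 (?f ` B1)"
    unfolding lin_indep2_def
  proof (intro allI impI)
    fix T assume T: "T \<subseteq> ?f ` B1" "T \<noteq> {}"
    then obtain T1 where T1: "T1 \<subseteq> B1" "T = ?f ` T1" by (auto simp: subset_image_iff)
    have fT1: "finite T1" using finite_subset[OF T1(1) fin] .
    have ne: "T1 \<noteq> {}" using T T1 by auto
    have "vsum T1 \<noteq> vzero" using li[unfolded lin_indep2_def, rule_format, OF T1(1) ne] .
    moreover have "vsum T1 \<in> vecs n" using vsum_in[OF T1(1) sp] C1v by auto
    moreover have "vsum T = ?f (vsum T1)" using T1 vsum_f[of T1 n] fT1 B1v by auto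
    ultimately show "vsum T \<noteq> vzero" by (simp add: concat_eq0)
  qed
  have sp2: "span2 (?f ` B1) = ?f ` C1"
  proof
    show "span2 (?f ` B1) \<subseteq> ?f ` C1"
    proof
      fix x assume "x \<in> span2 (?f ` B1)"
      then obtain T where T: "T \<subseteq> ?f ` B1" "x = vsum T" by (auto simp: span2_def)
      then obtain T1 where T1: "T1 \<subseteq> B1" "T = ?f ` T1" by (auto simp: subset_image_iff)
      have fT1: "finite T1" using finite_subset[OF T1(1) fin] .
      have "x = ?f (vsum T1)" using T T1 vsum_f[of T1 n] fT1 B1v by auto
      then show "x \<in> ?f ` C1" using vsum_in[OF T1(1) sp] by auto
    qed
  next
    show "?f ` C1 \<subseteq> span2 (?f ` B1)"
    proof
      fix x assume "x \<in> ?f ` C1"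
      then obtain u where u: "u \<in> C1" "x = ?f u" by auto
      then obtain T1 where T1: "T1 \<subseteq> B1" "u = vsum T1" using sp by (auto simp: span2_def)
      have fT1: "finite T1" using finite_subset[OF T1(1) fin] .
      have "x = vsum (?f ` T1)" using u T1 vsum_f[of T1 n] fT1 B1v by auto
      moreover have "?f ` T1 \<subseteq> ?f ` B1" using T1(1) by (rule image_mono)
      ultimately show "x \<in> span2 (?f ` B1)" using span2I by metis
    qed
  qed
  have cd: "card (?f ` B1) = card B1" using card_image[OF injB] .
  have sb: "?f ` B1 \<subseteq> ?f ` C1" using sub by (rule image_mono)
  show ?thesis by (rule has_dimI[OF finite_imageI[OF fin] sb li2 sp2 cd])
qed

lemma dim_C:
  assumes fin: "finite B1" and sub: "B1 \<subseteq> C1" and C1v: "C1 \<subseteq> vecs n"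
    and li: "lin_indep2 B1" and sp: "span2 B1 = C1" and n: "0 < n"
  shows "has_dim (uuv n C1 {vzero, ones n}) (card B1 + 1)"
proof -
  let ?f = "\<lambda>u. concat_vec n u u"
  let ?e = "concat_vec n vzero (ones n)"
  let ?B = "insert ?e (?f ` B1)"
  have B1v: "B1 \<subseteq> vecs n" using sub C1v by auto
  have injB: "inj_on ?f B1" using inj_f B1v inj_on_subset by blast
  have eN: "?e \<notin> ?f ` vecs n"
  proof
    assume "?e \<in> ?f ` vecs n"
    then obtain b where "b \<in> vecs n" "?e = ?f b" by auto
    then have "vzero = b" "ones n = b" using concat_eq[of vzero n "ones n" b b] vzero_vecs ones_vecs by auto
    then show False using ones_ne[OF n] by simp
  qed
  have eB: "?e \<notin> ?f ` B1" using eN B1v by auto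
  have key: "\<exists>T1 \<subseteq> B1. T - {?e} = ?f ` T1 \<and> vsum T =
      (if ?e \<in> T then concat_vec n (vsum T1) (vadd (vsum T1) (ones n)) else ?f (vsum T1))"
    if T: "T \<subseteq> ?B" for T
  proof -
    have "T - {?e} \<subseteq> ?f ` B1" using T by auto
    then obtain T1 where T1: "T1 \<subseteq> B1" "T - {?e} = ?f ` T1" by (auto simp: subset_image_iff)
    have fT1: "finite T1" using finite_subset[OF T1(1) fin] .
    have sv: "vsum T1 \<in> vecs n" using vsum_in[OF T1(1) sp] C1v by auto
    have vf: "vsum (T - {?e}) = ?f (vsum T1)" using T1 vsum_f[of T1 n] fT1 B1v by auto
    show ?thesis
    proof (cases "?e \<in> T")
      case True
      then have "T = insert ?e (T - {?e})" by auto
      then have "vsum T = vadd ?e (?f (vsum T1))"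
        using vsum_insert[of "T - {?e}" ?e] vf T1 fT1 by (metis Diff_iff finite_imageI singletonI)
      also have "\<dots> = concat_vec n (vsum T1) (vadd (vsum T1) (ones n))"
        by (simp add: concat_add vadd_comm)
      finally show ?thesis using T1 True by auto
    next
      case False
      then show ?thesis using T1 vf by auto
    qed
  qed
  have li2: "lin_indep2 ?B"
    unfolding lin_indep2_def
  proof (intro allI impI)
    fix T assume T: "T \<subseteq> ?B" "T \<noteq> {}"
    obtain T1 where T1: "T1 \<subseteq> B1" "T - {?e} = ?f ` T1" and
      vs: "vsum T = (if ?e \<in> T then concat_vec n (vsum T1) (vadd (vsum T1) (ones n)) else ?f (vsum T1))"
      using key[OF T(1)] by blast
    have sv: "vsum T1 \<in> vecs n" using vsum_in[OF T1(1) sp] C1v by auto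
    show "vsum T \<noteq> vzero"
    proof (cases "?e \<in> T")
      case True
      show ?thesis
      proof
        assume "vsum T = vzero"
        then have "vsum T1 = vzero" "vadd (vsum T1) (ones n) = vzero"
          using True vs concat_eq0[OF sv vadd_vecs[OF sv ones_vecs]] by auto
        then show False using ones_ne[OF n] by simp
      qed
    next
      case False
      then have "T1 \<noteq> {}" using T T1 by auto
      then have "vsum T1 \<noteq> vzero" using li T1 unfolding lin_indep2_def by blast
      then show ?thesis using False vs concat_eq0[OF sv sv] by simp
    qed
  qed
  have sp2: "span2 ?B = uuv n C1 {vzero, ones n}"
  proof
    show "span2 ?B \<subseteq> uuv n C1 {vzero, ones n}"
    proof
      fix x assume "x \<in> span2 ?B"
      then obtain T where T: "T \<subseteq> ?B" "x = vsum T" by (auto simp: span2_def)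
      obtain T1 where T1: "T1 \<subseteq> B1" "T - {?e} = ?f ` T1" and
        vs: "vsum T = (if ?e \<in> T then concat_vec n (vsum T1) (vadd (vsum T1) (ones n)) else ?f (vsum T1))"
        using key[OF T(1)] by blast
      have sC: "vsum T1 \<in> C1" using vsum_in[OF T1(1) sp] .
      show "x \<in> uuv n C1 {vzero, ones n}"
      proof (cases "?e \<in> T")
        case True
        then show ?thesis unfolding uuv_def using T vs sC by auto
      next
        case False
        then have "x = concat_vec n (vsum T1) (vadd (vsum T1) vzero)" using T vs by simp
        then show ?thesis unfolding uuv_def using sC by blast
      qed
    qed
  next
    show "uuv n C1 {vzero, ones n} \<subseteq> span2 ?B"
    proof
      fix x assume "x \<in> uuv n C1 {vzero, ones n}"
      then obtain u v where x: "x = concat_vec n u (vadd u v)" "u \<in> C1" "v \<in> {vzero, ones n}"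
        unfolding uuv_def by blast
      obtain T1 where T1: "T1 \<subseteq> B1" "u = vsum T1" using sp x(2) by (auto simp: span2_def)
      have fT1: "finite T1" using finite_subset[OF T1(1) fin] .
      have uv: "u \<in> vecs n" using x(2) C1v by auto
      have vf: "vsum (?f ` T1) = ?f u" using T1 vsum_f[of T1 n] fT1 B1v by auto
      have eT1: "?e \<notin> ?f ` T1" using eB T1 by auto
      show "x \<in> span2 ?B"
      proof (cases "v = vzero")
        case True
        then have "x = vsum (?f ` T1)" using x vf by simp
        then show ?thesis unfolding span2_def using T1 by blast
      next
        case False
        then have v: "v = ones n" using x by auto
        have "vsum (insert ?e (?f ` T1)) = vadd ?e (?f u)"
          using vsum_insert[OF _ eT1] fT1 vf by simp
        also have "\<dots> = x" using x v by (simp add: concat_add vadd_comm)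
        finally show ?thesis unfolding span2_def using T1 by blast
      qed
    qed
  qed
  have cd: "card ?B = card B1 + 1" using card_image[OF injB] eB fin by simp
  have sb: "?B \<subseteq> uuv n C1 {vzero, ones n}"
  proof -
    have "?e \<in> uuv n C1 {vzero, ones n}"
    proof -
      have "vzero \<in> C1" using sp unfolding span2_def by (metis (mono_tags, lifting) empty_subsetI mem_Collect_eq vsum_empty)
      then show ?thesis unfolding uuv_def by force
    qed
    moreover have "?f u \<in> uuv n C1 {vzero, ones n}" if "u \<in> B1" for u
      using that sub unfolding uuv_def
      by (smt (verit, best) insertCI mem_Collect_eq subsetD vadd_vzero(1))
    ultimately show ?thesis by auto
  qed
  show ?thesis by (rule has_dimI[OF _ sb li2 sp2 cd]) (use fin in simp)
qed

lemma hdist_wt: "hdist x y = wt (vadd x y)"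
  unfolding hdist_def wt_def by (simp add: bit_add_eq0)

lemma dist_set:
  assumes "linear_code m S"
  shows "{hdist x y | x y. x \<in> S \<and> y \<in> S \<and> x \<noteq> y} = {wt z | z. z \<in> S \<and> z \<noteq> vzero}"
proof (intro equalityI subsetI)
  fix w assume "w \<in> {hdist x y | x y. x \<in> S \<and> y \<in> S \<and> x \<noteq> y}"
  then obtain x y where "x \<in> S" "y \<in> S" "x \<noteq> y" "w = wt (vadd x y)" by (auto simp: hdist_wt)
  then show "w \<in> {wt z | z. z \<in> S \<and> z \<noteq> vzero}" using assms unfolding linear_code_def
    by (auto simp: vadd_eq0)
next
  fix w assume "w \<in> {wt z | z. z \<in> S \<and> z \<noteq> vzero}"
  then obtain z where "z \<in> S" "z \<noteq> vzero" "w = hdist z vzero" by (auto simp: hdist_wt)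
  then show "w \<in> {hdist x y | x y. x \<in> S \<and> y \<in> S \<and> x \<noteq> y}" using assms unfolding linear_code_def
    by auto
qed

lemma wt_le: "u \<in> vecs n \<Longrightarrow> wt u \<le> n"
proof -
  assume u: "u \<in> vecs n"
  have "{i. u i \<noteq> 0} \<subseteq> {..<n}" using u by (auto simp: vecs_def) (metis leI zero_neq_one)
  then have "wt u \<le> card {..<n}" unfolding wt_def by (intro card_mono) auto
  then show ?thesis by simp
qed

lemma inner_u_v:
  assumes "u \<in> vecs n" "even (wt u)" "v \<in> {vzero, ones n}"
  shows "inner n u v = 0"
proof (cases "v = vzero")
  case True then show ?thesis by simp
next
  case False
  then have "v = ones n" using assms(3) by blast
  then show ?thesis using inner_ones[OF assms(1)] assms(2) of_nat_bit_eq0 by simp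
qed

lemma inner_cc:
  assumes u: "u \<in> vecs n" "u' \<in> vecs n" "even (wt u)" "even (wt u')"
    and v: "v \<in> {vzero, ones n}" "v' \<in> {vzero, ones n}"
  shows "inner (2*n) (concat_vec n u (vadd u v)) (concat_vec n u' (vadd u' v')) =
     (if v = ones n \<and> v' = ones n then of_nat n else 0)"
proof -
  have a: "inner n u v' = 0" using inner_u_v[OF u(1) u(3) v(2)] .
  have b: "inner n v u' = 0" using inner_u_v[OF u(2) u(4) v(1)] inner_comm by metis
  have "inner (2*n) (concat_vec n u (vadd u v)) (concat_vec n u' (vadd u' v')) = 
     inner n u u' + (inner n u u' + inner n v u' + (inner n u v' + inner n v v'))"
    by (simp only: inner_concat inner_add1 inner_add2)
  also have "\<dots> = inner n v v'" by (simp only: a b add_0_right add_0_left bit_add_self2)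
  finally have e: "inner (2*n) (concat_vec n u (vadd u v)) (concat_vec n u' (vadd u' v')) = inner n v v'" .
  show ?thesis
  proof (cases "v = ones n \<and> v' = ones n")
    case True then show ?thesis using e inner_ones_ones by simp
  next
    case False
    then have "v = vzero \<or> v' = vzero" using v by blast
    then show ?thesis using e False by auto
  qed
qed

lemma vadd4: "vadd (vadd a b) (vadd c d) = vadd (vadd a c) (vadd b d)"
  by (simp add: fun_eq_iff ac_simps)

theorem corollary4:
  fixes n k1 d1 :: nat and C1 C2 C :: "bvec set"
  assumes "is_code n k1 d1 C1"
    and "even_like C1"
    and "C2 = {vzero, ones n}"
    and "is_code n 1 n C2"
    and "C = uuv n C1 C2"
  shows "(is_code (2 * n) (k1 + 1) (min (2 * d1) n) C \<and> odd_like C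
            \<longleftrightarrow> almost_self_orth (2 * n) C)
       \<and> (is_code (2 * n) (k1 + 1) (min (2 * d1) n) C \<and> even_like C
            \<longleftrightarrow> self_orth (2 * n) C)"
proof -
  let ?f = "\<lambda>u. concat_vec n u u"
  let ?cc = "\<lambda>u v. concat_vec n u (vadd u v)"
  have lc1: "linear_code n C1" and hd1: "has_dim C1 k1" and k1: "1 \<le> k1" and md1: "min_dist C1 = d1"
    using assms(1) unfolding is_code_def by auto
  obtain B1 where B1: "finite B1" "B1 \<subseteq> C1" "lin_indep2 B1" "span2 B1 = C1" "card B1 = k1"
    using hd1 unfolding has_dim_def by blast
  have C1v: "C1 \<subseteq> vecs n" and C1z: "vzero \<in> C1" and C1a: "\<And>x y. x \<in> C1 \<Longrightarrow> y \<in> C1 \<Longrightarrow> vadd x y \<in> C1"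
    using lc1 unfolding linear_code_def by auto
  have ev1: "\<And>u. u \<in> C1 \<Longrightarrow> even (wt u)" using assms(2) unfolding even_like_def by auto
  obtain b where b: "b \<in> B1" using B1(5) k1 by fastforce
  have bnz: "b \<noteq> vzero" using B1(3) b unfolding lin_indep2_def
    by (metis empty_not_insert empty_subsetI insert_subset vsum_single)
  have bC: "b \<in> C1" using b B1 by auto
  have n: "0 < n"
  proof (rule ccontr)
    assume "\<not> 0 < n"
    then have "b = vzero" using bC C1v by (auto simp: fun_eq_iff vecs_def)
    then show False using bnz by simp
  qed
  have onz: "ones n \<noteq> vzero" using ones_ne[OF n] .
  have Cdef: "C = {?cc u v | u v. u \<in> C1 \<and> v \<in> {vzero, ones n}}"
    using assms(3,5) unfolding uuv_def by simp
  have Cuuv: "C = uuv n C1 {vzero, ones n}" using assms(3,5) by simp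
  have V2: "v \<in> vecs n" if "v \<in> {vzero, ones n}" for v
    using that vzero_vecs ones_vecs by blast
  have ccv: "?cc u v \<in> vecs (2*n)" if "u \<in> C1" "v \<in> {vzero, ones n}" for u v
  proof -
    have uv: "u \<in> vecs n" using that(1) C1v by blast
    show ?thesis by (intro concat_vecs uv vadd_vecs V2 that(2))
  qed
  have CE: "x \<in> C \<longleftrightarrow> (\<exists>u v. x = ?cc u v \<and> u \<in> C1 \<and> v \<in> {vzero, ones n})" for x
    by (simp add: Cdef)
  have CI: "?cc u v \<in> C" if "u \<in> C1" "v \<in> {vzero, ones n}" for u v
    using that CE by blast
  have CD: "\<exists>u v. x = ?cc u v \<and> u \<in> C1 \<and> v \<in> {vzero, ones n}" if "x \<in> C" for x
    using CE that by blast
  have lc: "linear_code (2*n) C"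
    unfolding linear_code_def
  proof (intro conjI ballI subsetI)
    fix x assume "x \<in> C"
    then obtain u v where "x = ?cc u v" "u \<in> C1" "v \<in> {vzero, ones n}" using CD by blast
    then show "x \<in> vecs (2*n)" using ccv by simp
  next
    have "?cc vzero vzero \<in> C" using CI[of vzero vzero] C1z by simp
    then show "vzero \<in> C" by simp
  next
    fix x y assume "x \<in> C" "y \<in> C"
    then obtain u v u' v' where x: "x = ?cc u v" "u \<in> C1" "v \<in> {vzero, ones n}"
      and y: "y = ?cc u' v'" "u' \<in> C1" "v' \<in> {vzero, ones n}" using CD by meson
    have "vadd x y = concat_vec n (vadd u u') (vadd (vadd u v) (vadd u' v'))"
      using x y by (simp only: concat_add)
    also have "vadd (vadd u v) (vadd u' v') = vadd (vadd u u') (vadd v v')"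
      by (rule vadd4)
    finally have e: "vadd x y = ?cc (vadd u u') (vadd v v')" .
    have "vadd v v' \<in> {vzero, ones n}" using x(3) y(3) by auto
    then show "vadd x y \<in> C" using e CI C1a x(2) y(2) by simp
  qed
  have hdC: "has_dim C (k1 + 1)" using dim_C[OF B1(1) B1(2) C1v B1(3) B1(4) n] B1(5) Cuuv by simp
  have wt0: "wt (?cc u vzero) = 2 * wt u" if "u \<in> C1" for u
    using that C1v by (auto simp: wt_concat)
  have wt1: "wt (?cc u (ones n)) = n" if "u \<in> C1" for u
    using that C1v wt_ones by (auto simp: wt_concat vadd_vecs ones_vecs)
  let ?W1 = "{wt z | z. z \<in> C1 \<and> z \<noteq> vzero}"
  have W1fin: "finite ?W1"
    by (rule finite_subset[of _ "{..n}"]) (use C1v wt_le in auto)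
  have W1ne: "?W1 \<noteq> {}" using bC bnz by auto
  have md1': "d1 = Min ?W1" using md1 dist_set[OF lc1] unfolding min_dist_def by simp
  have WC: "{wt z | z. z \<in> C \<and> z \<noteq> vzero} = insert n ((*) 2 ` ?W1)"
  proof (intro equalityI subsetI)
    fix w assume "w \<in> {wt z | z. z \<in> C \<and> z \<noteq> vzero}"
    then obtain z where z: "z \<in> C" "z \<noteq> vzero" "w = wt z" by auto
    then obtain u v where zz: "z = ?cc u v" "u \<in> C1" "v \<in> {vzero, ones n}" using CD by meson
    show "w \<in> insert n ((*) 2 ` ?W1)"
    proof (cases "v = vzero")
      case True
      then have "u \<noteq> vzero" using zz z by auto
      then show ?thesis using zz z True wt0 by auto
    next
      case False
      then show ?thesis using zz z wt1 by auto
    qed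
  next
    fix w assume "w \<in> insert n ((*) 2 ` ?W1)"
    then consider "w = n" | u where "u \<in> C1" "u \<noteq> vzero" "w = 2 * wt u" by auto
    then show "w \<in> {wt z | z. z \<in> C \<and> z \<noteq> vzero}"
    proof cases
      case 1
      have "?cc vzero (ones n) \<in> C" using CI[of vzero "ones n"] C1z by simp
      moreover have "?cc vzero (ones n) \<noteq> vzero"
        using concat_eq0[OF vzero_vecs ones_vecs] onz by simp
      ultimately have "wt (?cc vzero (ones n)) \<in> {wt z |z. z \<in> C \<and> z \<noteq> vzero}" by blast
      then show ?thesis using 1 wt1[OF C1z] by simp
    next
      case 2
      have "?cc u vzero \<in> C" using CI[of u vzero] 2 by simp
      moreover have "?cc u vzero \<noteq> vzero"
        using concat_eq0[of u n u] 2 C1v by auto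
      ultimately have "wt (?cc u vzero) \<in> {wt z |z. z \<in> C \<and> z \<noteq> vzero}" by blast
      then show ?thesis using 2 wt0 by simp
    qed
  qed
  have mdC: "min_dist C = min (2 * d1) n"
  proof -
    have "min_dist C = Min (insert n ((*) 2 ` ?W1))"
      unfolding min_dist_def using dist_set[OF lc] WC by simp
    also have "\<dots> = min n (Min ((*) 2 ` ?W1))"
      using W1fin W1ne by (simp add: Min_insert)
    also have "Min ((*) 2 ` ?W1) = 2 * Min ?W1"
      using mono_Min_commute[of "(*) (2::nat)" ?W1] W1fin W1ne by (simp add: mono_def)
    finally show ?thesis using md1' by simp
  qed
  have code: "is_code (2 * n) (k1 + 1) (min (2 * d1) n) C"
    unfolding is_code_def using lc hdC mdC by simp
  have inn: "inner (2*n) (?cc u v) (?cc u' v') = (if v = ones n \<and> v' = ones n then of_nat n else 0)"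
    if "u \<in> C1" "u' \<in> C1" "v \<in> {vzero, ones n}" "v' \<in> {vzero, ones n}" for u u' v v'
    by (rule inner_cc[OF subsetD[OF C1v that(1)] subsetD[OF C1v that(2)] ev1[OF that(1)] ev1[OF that(2)] that(3) that(4)])
  show ?thesis
  proof (cases "even n")
    case True
    have evC: "even_like C" unfolding even_like_def
    proof
      fix x assume "x \<in> C"
      then obtain u v where zz: "x = ?cc u v" "u \<in> C1" "v \<in> {vzero, ones n}" using CD by meson
      then show "even (wt x)" using wt0 wt1 True by auto
    qed
    have hullC: "hull (2*n) C = C"
    proof -
      have "C \<subseteq> euclid_dual (2*n) C"
      proof
        fix y assume y: "y \<in> C"
        obtain u' v' where yy: "y = ?cc u' v'" "u' \<in> C1" "v' \<in> {vzero, ones n}" using y CD by meson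
        have "inner (2*n) x y = 0" if xC: "x \<in> C" for x
        proof -
          obtain u v where xx: "x = ?cc u v" "u \<in> C1" "v \<in> {vzero, ones n}" using CD[OF xC] by blast
          show ?thesis using inn[OF xx(2) yy(2) xx(3) yy(3)] xx(1) yy(1) True of_nat_bit_eq0 by simp
        qed
        then show "y \<in> euclid_dual (2*n) C" unfolding euclid_dual_def using y lc
          unfolding linear_code_def by auto
      qed
      then show ?thesis unfolding hull_def by auto
    qed
    have "\<not> almost_self_orth (2*n) C"
      unfolding almost_self_orth_def hullC
    proof
      assume "linear_code (2 * n) C \<and> (\<exists>k. has_dim C (k + 1) \<and> has_dim C k)"
      then obtain k where "has_dim C (k + 1)" "has_dim C k" by blast
      then show False using has_dim_unique by fastforce
    qed
    moreover have "self_orth (2*n) C" unfolding self_orth_def hullC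
      by (rule conjI[OF lc exI[of _ "k1+1"]]) (use hdC in simp)
    ultimately show ?thesis using evC code unfolding odd_like_def by simp
  next
    case False
    have eC: "?cc vzero (ones n) \<in> C" using CI[of vzero "ones n"] C1z by simp
    have odC: "odd_like C" unfolding odd_like_def even_like_def
      using eC wt1[OF C1z] False by (metis (no_types, lifting) vadd_vzero(2))
    have hullC: "hull (2*n) C = ?f ` C1"
    proof (intro equalityI subsetI)
      fix y assume y: "y \<in> hull (2*n) C"
      then have yC: "y \<in> C" and yd: "\<forall>x\<in>C. inner (2*n) x y = 0"
        unfolding hull_def euclid_dual_def by auto
      obtain u' v' where zz: "y = ?cc u' v'" "u' \<in> C1" "v' \<in> {vzero, ones n}" using yC CD by meson
      have "v' \<noteq> ones n"
      proof
        assume h: "v' = ones n"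
        have "inner (2*n) (?cc vzero (ones n)) y = 0" using yd eC by blast
        then show False using inn[OF C1z zz(2) _ zz(3)] h zz(1) False of_nat_bit_eq0 by auto
      qed
      then have "v' = vzero" using zz by auto
      then show "y \<in> ?f ` C1" using zz by auto
    next
      fix y assume "y \<in> ?f ` C1"
      then obtain u where u: "u \<in> C1" "y = ?cc u vzero" by auto
      have yC: "y \<in> C" using CI[of u vzero] u by simp
      have "inner (2*n) x y = 0" if xC: "x \<in> C" for x
      proof -
        obtain u0 v0 where x: "x = ?cc u0 v0" "u0 \<in> C1" "v0 \<in> {vzero, ones n}" using CD[OF xC] by blast
        have "inner (2*n) x (?cc u vzero) = 0"
          using inn[OF x(2) u(1) x(3), of vzero] x(1) onz onz[symmetric] by simp
        then show ?thesis using u(2) by simp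
      qed
      then show "y \<in> hull (2*n) C" unfolding hull_def euclid_dual_def
        using yC lc unfolding linear_code_def by auto
    qed
    have hdH: "has_dim (hull (2*n) C) k1" using dim_f[OF B1(1) B1(2) C1v B1(3) B1(4)] B1(5) hullC by simp
    have "almost_self_orth (2*n) C" unfolding almost_self_orth_def
      by (rule conjI[OF lc exI[of _ k1]]) (use hdC hdH in simp)
    moreover have "\<not> self_orth (2*n) C"
    proof
      assume "self_orth (2*n) C"
      then obtain k where "has_dim C k" "has_dim (hull (2*n) C) k" unfolding self_orth_def by blast
      then show False using hdC hdH has_dim_unique by (metis n_not_Suc_n Suc_eq_plus1)
    qed
    ultimately show ?thesis using odC code unfolding odd_like_def by simp
  qed
qed

end
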